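(* Let $R$ be any commutative ring with $1$, $n$ a positive integer, $r,s$ nonnegative integers, $V=R^n$, $G=GL_n(R)$. Let $\sigma_{r+s}:R\mathfrak{S}_{r+s}\to\mathrm{End}_G(V^{\otimes r+s})$ and $\sigma_{r,s}:\mathfrak{B}_{r,s}^n\to\mathrm{End}_G(V^{\otimes r}\otimes {V^*}^{\otimes s})$ be the representation maps described in the context. Then: (1) $\sigma_{r,s}$ is surjective if and only if $\sigma_{r+s}$ is surjective; (2) the action of $\mathfrak{B}_{r,s}^n$ on $V^{\otimes r}\otimes {V^*}^{\otimes s}$ is faithful if and only if $n\ge r+s$; (3) the annihilator of $\mathfrak{B}_{r,s}^n$ on $V^{\otimes r}\otimes {V^*}^{\otimes s}$ is free over $R$ if and only if the annihilator of $R\mathfrak{S}_{r+s}$ on $V^{\otimes r+s}$ is free over $R$, and if so they have the same rank.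
   Context: $G=GL_n(R)$ acts naturally on $V=R^n$ (basis $v_1,\dots,v_n$), on $V^*$ by $(gf)(v)=f(g^{-1}v)$, and diagonally on tensor products. A Brauer $m$-diagram is a graph with $m$ vertices in a top row, $m$ in a bottom row and $m$ edges, each vertex lying on exactly one edge. The Brauer algebra $\mathfrak{B}_m^n$ is the free $R$-module on Brauer $m$-diagrams with product $d_1d_2=n^kd_3$, where $d_3$ is obtained by stacking $d_1$ above $d_2$, identifying the bottom row of $d_1$ with the top row of $d_2$, and removing the middle vertices and the $k$ closed cycles. An edge is propagating if its endpoints lie in different rows; totally propagating diagrams span a copy of $R\mathfrak{S}_m$. With $m=r+s$, let $F$ be the first $r$ vertices of each row and $L$ the last $s$. The walled Brauer algebra $\mathfrak{B}_{r,s}^n$ is the $R$-span of diagrams in which every propagating edge has both endpoints in $F$ or both in $L$, and every non-propagating edge has one endpoint in $F$ and one in $L$. A Brauer diagram $d$ acts from the right on $V_1\otimes\cdots\otimes V_m$ (each $V_k\in\{V,V^*\}$, with $V^*$ identified with $V$ via $v_i\mapsto v_i^*$, basis $x_{i_1}\otimes\cdots\otimes x_{i_m}$ indexed by $\mathbf i\in\{1,\dots,n\}^m$) via the matrix $(a_{\mathbf i,\mathbf j})$: write the entries of $\mathbf i$ along the top row and of $\mathbf j$ along the bottom row; $a_{\mathbf i,\mathbf j}=1$ if both ends of every edge carry the same index, and $0$ otherwise. This gives $\sigma_{r+s}$ (action of $R\mathfrak{S}_{r+s}$ on $V^{\otimes r+s}$) and $\sigma_{r,s}$ (action of $\mathfrak{B}_{r,s}^n$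 on $V^{\otimes r}\otimes {V^*}^{\otimes s}$), both with image commuting with $G$. *)

theory Defs
  imports "HOL-Library.FuncSet"
begin

text \<open>Multi-indices \<open>\<^bold>i \<in> {1..n}^m\<close>, encoded 0-based: functions on {0..<m} with values in {0..<n}.
  They index the standard basis \<open>x_\<^bold>i\<close> of \<open>V_1 \<otimes> ... \<otimes> V_m\<close>, \<open>V = R^n\<close>.\<close>
definition idx :: "nat \<Rightarrow> nat \<Rightarrow> (nat \<Rightarrow> nat) set" where
  "idx n m = {0..<m} \<rightarrow>\<^sub>E {0..<n}"

text \<open>Vertices are 0..<2m: vertex k (k<m) is the k-th vertex of the top row,
  vertex m+k is the k-th vertex of the bottom row. A diagram is the perfect matching given by a
  fixed-point-free involution d of {0..<2m} (edges {x, d x}).\<close>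
definition brauer_diagrams :: "nat \<Rightarrow> (nat \<Rightarrow> nat) set" where
  "brauer_diagrams m = {d \<in> {0..<2*m} \<rightarrow>\<^sub>E {0..<2*m}. \<forall>x<2*m. d (d x) = x \<and> d x \<noteq> x}"

definition top_row :: "nat \<Rightarrow> nat \<Rightarrow> bool" where
  "top_row m x \<longleftrightarrow> x < m"

definition col :: "nat \<Rightarrow> nat \<Rightarrow> nat" where
  "col m x = (if x < m then x else x - m)"

definition propagating :: "nat \<Rightarrow> (nat \<Rightarrow> nat) \<Rightarrow> nat \<Rightarrow> bool" where
  "propagating m d x \<longleftrightarrow> top_row m x \<noteq> top_row m (d x)"

definition in_F :: "nat \<Rightarrow> nat \<Rightarrow> nat \<Rightarrow> bool" where
  "in_F r m x \<longleftrightarrow> col m x < r"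

definition walled_diagrams :: "nat \<Rightarrow> nat \<Rightarrow> (nat \<Rightarrow> nat) set" where
  "walled_diagrams r s = {d \<in> brauer_diagrams (r+s). \<forall>x<2*(r+s).
      (propagating (r+s) d x \<longrightarrow> in_F r (r+s) x = in_F r (r+s) (d x)) \<and>
      (\<not> propagating (r+s) d x \<longrightarrow> in_F r (r+s) x \<noteq> in_F r (r+s) (d x))}"

text \<open>Totally propagating diagrams (spanning the copy of the group algebra of S_m).\<close>
definition perm_diagrams :: "nat \<Rightarrow> (nat \<Rightarrow> nat) set" where
  "perm_diagrams m = {d \<in> brauer_diagrams m. \<forall>x<2*m. propagating m d x}"

text \<open>Elements of the free R-module on a set D of diagrams: coefficient functions vanishing off D.\<close>
definition alg_elems :: "(nat \<Rightarrow> nat) set \<Rightarrow> ((nat \<Rightarrow> nat) \<Rightarrow> 'a::comm_ring_1) set" where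
  "alg_elems D = {b. \<forall>d. d \<notin> D \<longrightarrow> b d = 0}"

definition lab :: "nat \<Rightarrow> (nat \<Rightarrow> nat) \<Rightarrow> (nat \<Rightarrow> nat) \<Rightarrow> nat \<Rightarrow> nat" where
  "lab m i j x = (if x < m then i x else j (x - m))"

definition diag_coeff :: "nat \<Rightarrow> (nat \<Rightarrow> nat) \<Rightarrow> (nat \<Rightarrow> nat) \<Rightarrow> (nat \<Rightarrow> nat) \<Rightarrow> 'a::comm_ring_1" where
  "diag_coeff m d i j = (if \<forall>x<2*m. lab m i j x = lab m i j (d x) then 1 else 0)"

text \<open>The representation map on the span of D: b \<mapsto> the right-action matrix
  A i j (meaning x_i . b = \<Sum>_j A i j x_j), zero outside the index set.\<close>
definition rep_map :: "nat \<Rightarrow> nat \<Rightarrow> (nat \<Rightarrow> nat) set \<Rightarrow> ((nat \<Rightarrow> nat) \<Rightarrow> 'a::comm_ring_1)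
    \<Rightarrow> (nat \<Rightarrow> nat) \<Rightarrow> (nat \<Rightarrow> nat) \<Rightarrow> 'a" where
  "rep_map n m D b i j =
     (if i \<in> idx n m \<and> j \<in> idx n m then \<Sum>d\<in>D. b d * diag_coeff m d i j else 0)"

definition sigma_walled :: "nat \<Rightarrow> nat \<Rightarrow> nat \<Rightarrow> ((nat \<Rightarrow> nat) \<Rightarrow> 'a::comm_ring_1)
    \<Rightarrow> (nat \<Rightarrow> nat) \<Rightarrow> (nat \<Rightarrow> nat) \<Rightarrow> 'a" where
  "sigma_walled n r s b = rep_map n (r+s) (walled_diagrams r s) b"

definition sigma_sym :: "nat \<Rightarrow> nat \<Rightarrow> ((nat \<Rightarrow> nat) \<Rightarrow> 'a::comm_ring_1)
    \<Rightarrow> (nat \<Rightarrow> nat) \<Rightarrow> (nat \<Rightarrow> nat) \<Rightarrow> 'a" where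
  "sigma_sym n m b = rep_map n m (perm_diagrams m) b"

text \<open>GL_n(R): pairs (g, g^{-1}) of mutually inverse n x n matrices (entries indexed from 0).\<close>
definition GL :: "nat \<Rightarrow> ((nat \<Rightarrow> nat \<Rightarrow> 'a::comm_ring_1) \<times> (nat \<Rightarrow> nat \<Rightarrow> 'a)) set" where
  "GL n = {(g, h). \<forall>i<n. \<forall>j<n.
      (\<Sum>k<n. g i k * h k j) = (if i = j then 1 else 0) \<and>
      (\<Sum>k<n. h i k * g k j) = (if i = j then 1 else 0)}"

text \<open>Action of g on V_1 \<otimes> ... \<otimes> V_m, where tensor factor k is V if eps k, and V* otherwise:
  tensor_rho m eps g h l j = coefficient of x_l in g x_j.
  On V: g v_j = \<Sum>_i g_{ij} v_i; on V*: g v_j* = \<Sum>_l (g^{-1})_{jl} v_l*.\<close>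
definition tensor_rho :: "nat \<Rightarrow> (nat \<Rightarrow> bool) \<Rightarrow> (nat \<Rightarrow> nat \<Rightarrow> 'a::comm_ring_1) \<Rightarrow>
    (nat \<Rightarrow> nat \<Rightarrow> 'a) \<Rightarrow> (nat \<Rightarrow> nat) \<Rightarrow> (nat \<Rightarrow> nat) \<Rightarrow> 'a" where
  "tensor_rho m eps g h l j = (\<Prod>k<m. if eps k then g (l k) (j k) else h (j k) (l k))"

text \<open>End_G(V_1 \<otimes> ... \<otimes> V_m), as right-action matrices A (x_i \<mapsto> \<Sum>_j A i j x_j)
  supported on the index set and commuting with the action of every g in GL_n(R).\<close>
definition End_G :: "nat \<Rightarrow> nat \<Rightarrow> (nat \<Rightarrow> bool) \<Rightarrow>
    ((nat \<Rightarrow> nat) \<Rightarrow> (nat \<Rightarrow> nat) \<Rightarrow> 'a::comm_ring_1) set" where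
  "End_G n m eps = {A. (\<forall>i j. \<not> (i \<in> idx n m \<and> j \<in> idx n m) \<longrightarrow> A i j = 0) \<and>
     (\<forall>(g, h) \<in> GL n. \<forall>j \<in> idx n m. \<forall>l \<in> idx n m.
        (\<Sum>i\<in>idx n m. tensor_rho m eps g h i j * A i l) =
        (\<Sum>k\<in>idx n m. A j k * tensor_rho m eps g h l k))}"

definition annihilator :: "(nat \<Rightarrow> nat) set \<Rightarrow> (((nat \<Rightarrow> nat) \<Rightarrow> 'a::comm_ring_1)
    \<Rightarrow> (nat \<Rightarrow> nat) \<Rightarrow> (nat \<Rightarrow> nat) \<Rightarrow> 'a) \<Rightarrow> ((nat \<Rightarrow> nat) \<Rightarrow> 'a) set" where
  "annihilator D sigma = {b \<in> alg_elems D. sigma b = (\<lambda>_ _. 0)}"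

definition free_of_rank :: "('b \<Rightarrow> 'a::comm_ring_1) set \<Rightarrow> nat \<Rightarrow> bool" where
  "free_of_rank K k \<longleftrightarrow> (\<exists>f. (\<forall>t<k. f t \<in> K) \<and>
      (\<forall>c. (\<lambda>x. \<Sum>t<k. c t * f t x) = (\<lambda>_. 0) \<longrightarrow> (\<forall>t<k. c t = 0)) \<and>
      (\<forall>v\<in>K. \<exists>c. v = (\<lambda>x. \<Sum>t<k. c t * f t x)))"

definition free_module :: "('b \<Rightarrow> 'a::comm_ring_1) set \<Rightarrow> bool" where
  "free_module K \<longleftrightarrow> (\<exists>k. free_of_rank K k)"

end

theory Submission
  imports Defs "HOL-Combinatorics.Permutations"
begin

definition sw :: "(nat \<Rightarrow> bool) \<Rightarrow> (nat \<Rightarrow> nat) \<Rightarrow> (nat \<Rightarrow> nat) \<Rightarrow> nat \<Rightarrow> nat" where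
  "sw L u v = (\<lambda>k. if L k then v k else u k)"

definition PsiM :: "(nat \<Rightarrow> bool) \<Rightarrow> ((nat \<Rightarrow> nat) \<Rightarrow> (nat \<Rightarrow> nat) \<Rightarrow> 'a) \<Rightarrow> (nat \<Rightarrow> nat) \<Rightarrow> (nat \<Rightarrow> nat) \<Rightarrow> 'a" where
  "PsiM L A = (\<lambda>i j. A (sw L i j) (sw L j i))"

lemma sw_sw: "sw L (sw L u v) (sw L v u) = u"
  by (auto simp: sw_def)

lemma PsiM_PsiM[simp]: "PsiM L (PsiM L A) = A"
  by (simp add: PsiM_def sw_sw)

lemma sw_idx: "u \<in> idx n m \<Longrightarrow> v \<in> idx n m \<Longrightarrow> sw L u v \<in> idx n m"
  by (auto simp: sw_def idx_def PiE_iff extensional_def)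

lemma sw_idx_iff: "(sw L u v \<in> idx n m \<and> sw L v u \<in> idx n m) \<longleftrightarrow> (u \<in> idx n m \<and> v \<in> idx n m)"
proof
  assume "sw L u v \<in> idx n m \<and> sw L v u \<in> idx n m"
  then have "sw L (sw L u v) (sw L v u) \<in> idx n m" "sw L (sw L v u) (sw L u v) \<in> idx n m"
    by (auto intro: sw_idx)
  then show "u \<in> idx n m \<and> v \<in> idx n m" by (simp add: sw_sw)
qed (auto intro: sw_idx)

lemma finite_idx[simp]: "finite (idx n m)"
  by (simp add: idx_def finite_PiE)

lemma GL_sym: "(g, h) \<in> GL n \<Longrightarrow> (h, g) \<in> GL n"
  by (auto simp: GL_def)

lemma prod_delta:
  assumes "x \<in> idx n m" "y \<in> idx n m"
  shows "(\<Prod>t<m. (if x t = y t then 1 else 0 :: 'a::comm_ring_1)) = (if x = y then 1 else 0)"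
proof (cases "x = y")
  case True then show ?thesis by simp
next
  case False
  then obtain t where "x t \<noteq> y t" by auto
  with assms have "t < m" by (auto simp: idx_def PiE_iff extensional_def) (metis atLeastLessThan_iff zero_le)
  then show ?thesis using False \<open>x t \<noteq> y t\<close> by (intro trans[OF prod_zero]) auto
qed

lemma rho_inv:
  assumes gh: "(g, h) \<in> GL n" and x: "x \<in> idx n m" and y: "y \<in> idx n m"
  shows "(\<Sum>z\<in>idx n m. tensor_rho m eps g h z x * tensor_rho m eps h g y z) = (if x = y then 1 else (0::'a::comm_ring_1))"
proof -
  define f where "f = (\<lambda>t a. (if eps t then g a (x t) else h (x t) a) * (if eps t then h (y t) a else g a (y t)))"
  have "(\<Sum>z\<in>idx n m. tensor_rho m eps g h z x * tensor_rho m eps h g y z)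
      = (\<Sum>z\<in>idx n m. \<Prod>t\<in>{0..<m}. f t (z t))"
    by (intro sum.cong refl) (simp add: tensor_rho_def f_def prod.distrib[symmetric] atLeast0LessThan)
  also have "\<dots> = (\<Prod>t\<in>{0..<m}. \<Sum>a\<in>{0..<n}. f t a)"
    unfolding idx_def by (rule prod_sum_PiE[symmetric]) auto
  also have "\<dots> = (\<Prod>t<m. (if x t = y t then 1 else 0))"
  proof (intro prod.cong, simp add: atLeast0LessThan)
    fix t assume "t \<in> {..<m}"
    then have xt: "x t < n" and yt: "y t < n" using x y by (auto simp: idx_def PiE_iff)
    have g1: "(\<Sum>k<n. h i k * g k j) = (if i = j then 1 else 0)" if "i < n" "j < n" for i j
      using gh that by (auto simp: GL_def)
    show "(\<Sum>a\<in>{0..<n}. f t a) = (if x t = y t then 1 else 0)"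
    proof (cases "eps t")
      case True
      have "(\<Sum>a\<in>{0..<n}. f t a) = (\<Sum>k<n. h (y t) k * g k (x t))"
        by (intro sum.cong) (auto simp: f_def True atLeast0LessThan mult.commute)
      then show ?thesis using g1[OF yt xt] by auto
    next
      case False
      have "(\<Sum>a\<in>{0..<n}. f t a) = (\<Sum>k<n. h (x t) k * g k (y t))"
        by (intro sum.cong) (auto simp: f_def False atLeast0LessThan)
      then show ?thesis using g1[OF xt yt] by auto
    qed
  qed
  also have "\<dots> = (if x = y then 1 else 0)" by (rule prod_delta[OF x y])
  finally show ?thesis .
qed

lemma comm_imp_conj:
  fixes A :: "(nat \<Rightarrow> nat) \<Rightarrow> (nat \<Rightarrow> nat) \<Rightarrow> 'a::comm_ring_1"
  assumes gh: "(g, h) \<in> GL n"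
    and comm: "\<forall>j\<in>idx n m. \<forall>l\<in>idx n m. (\<Sum>i\<in>idx n m. tensor_rho m eps g h i j * A i l) =
        (\<Sum>k\<in>idx n m. A j k * tensor_rho m eps g h l k)"
    and j: "j \<in> idx n m" and l: "l \<in> idx n m"
  shows "A j l = (\<Sum>i\<in>idx n m. \<Sum>k\<in>idx n m. tensor_rho m eps g h i j * A i k * tensor_rho m eps h g l k)"
proof -
  let ?I = "idx n m"
  have "(\<Sum>i\<in>?I. \<Sum>k\<in>?I. tensor_rho m eps g h i j * A i k * tensor_rho m eps h g l k)
      = (\<Sum>k\<in>?I. (\<Sum>i\<in>?I. tensor_rho m eps g h i j * A i k) * tensor_rho m eps h g l k)"
    by (subst sum.swap) (simp add: sum_distrib_right)
  also have "\<dots> = (\<Sum>k\<in>?I. (\<Sum>p\<in>?I. A j p * tensor_rho m eps g h k p) * tensor_rho m eps h g l k)"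
    using comm j by (intro sum.cong refl) auto
  also have "\<dots> = (\<Sum>p\<in>?I. A j p * (\<Sum>k\<in>?I. tensor_rho m eps g h k p * tensor_rho m eps h g l k))"
    unfolding sum_distrib_right sum_distrib_left mult.assoc by (rule sum.swap)
  also have "\<dots> = (\<Sum>p\<in>?I. A j p * (if p = l then 1 else 0))"
    using rho_inv[OF gh _ l] by (intro sum.cong refl) auto
  also have "\<dots> = A j l" using l by (simp add: if_distrib cong: if_cong)
  finally show ?thesis by simp
qed

lemma conj_imp_comm:
  fixes A :: "(nat \<Rightarrow> nat) \<Rightarrow> (nat \<Rightarrow> nat) \<Rightarrow> 'a::comm_ring_1"
  assumes gh: "(g, h) \<in> GL n"
    and conj: "\<forall>j\<in>idx n m. \<forall>l\<in>idx n m.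
       A j l = (\<Sum>i\<in>idx n m. \<Sum>k\<in>idx n m. tensor_rho m eps g h i j * A i k * tensor_rho m eps h g l k)"
    and j: "j \<in> idx n m" and l: "l \<in> idx n m"
  shows "(\<Sum>i\<in>idx n m. tensor_rho m eps g h i j * A i l) =
        (\<Sum>k\<in>idx n m. A j k * tensor_rho m eps g h l k)"
proof -
  let ?I = "idx n m"
  have hg: "(h, g) \<in> GL n" by (rule GL_sym[OF gh])
  have "(\<Sum>k\<in>?I. A j k * tensor_rho m eps g h l k)
     = (\<Sum>k\<in>?I. (\<Sum>i\<in>?I. \<Sum>p\<in>?I. tensor_rho m eps g h i j * A i p * tensor_rho m eps h g k p) * tensor_rho m eps g h l k)"
    using conj j by (intro sum.cong refl) auto
  also have "\<dots> = (\<Sum>i\<in>?I. \<Sum>p\<in>?I. tensor_rho m eps g h i j * A i p * (\<Sum>k\<in>?I. tensor_rho m eps h g k p * tensor_rho m eps g h l k))"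
  proof -
    define F where "F = (\<lambda>k i p. tensor_rho m eps g h i j * (A i p * (tensor_rho m eps h g k p * tensor_rho m eps g h l k)))"
    have "(\<Sum>k\<in>?I. \<Sum>i\<in>?I. \<Sum>p\<in>?I. F k i p) = (\<Sum>i\<in>?I. \<Sum>k\<in>?I. \<Sum>p\<in>?I. F k i p)"
      by (rule sum.swap)
    also have "\<dots> = (\<Sum>i\<in>?I. \<Sum>p\<in>?I. \<Sum>k\<in>?I. F k i p)"
      by (intro sum.cong refl sum.swap)
    finally show ?thesis unfolding F_def sum_distrib_right sum_distrib_left mult.assoc .
  qed
  also have "\<dots> = (\<Sum>i\<in>?I. \<Sum>p\<in>?I. tensor_rho m eps g h i j * A i p * (if p = l then 1 else 0))"
    using rho_inv[OF hg _ l] by (intro sum.cong refl) auto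
  also have "\<dots> = (\<Sum>i\<in>?I. tensor_rho m eps g h i j * A i l)"
    using l by (simp add: if_distrib cong: if_cong)
  finally show ?thesis by simp
qed

lemma End_G_conj:
  "End_G n m eps = {A. (\<forall>i j. \<not> (i \<in> idx n m \<and> j \<in> idx n m) \<longrightarrow> A i j = 0) \<and>
     (\<forall>(g, h) \<in> GL n. \<forall>j\<in>idx n m. \<forall>l\<in>idx n m.
       A j l = (\<Sum>i\<in>idx n m. \<Sum>k\<in>idx n m. tensor_rho m eps g h i j * A i k * tensor_rho m eps h g l k))}"
  unfolding End_G_def
  apply (rule Collect_cong)
  apply (rule conj_cong[OF refl])
  apply (intro iffI ballI; clarify)
   apply (rule comm_imp_conj; assumption?)
   apply blast
  apply (rule conj_imp_comm; assumption?)
  apply blast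
  done

lemma rho_sw:
  "tensor_rho m eps g h (sw L i k) (sw L j l) * tensor_rho m eps h g (sw L l j) (sw L k i)
   = tensor_rho m (\<lambda>t. eps t \<noteq> L t) g h i j * tensor_rho m (\<lambda>t. eps t \<noteq> L t) h g l k"
  unfolding tensor_rho_def prod.distrib[symmetric]
  by (intro prod.cong refl) (auto simp: sw_def mult.commute)

lemma sum_sw_reindex:
  "(\<Sum>i\<in>idx n m. \<Sum>k\<in>idx n m. F i k) = (\<Sum>i\<in>idx n m. \<Sum>k\<in>idx n m. F (sw L i k) (sw L k i))"
proof -
  let ?I = "idx n m"
  have "(\<Sum>i\<in>?I. \<Sum>k\<in>?I. F i k) = (\<Sum>(i,k)\<in>?I \<times> ?I. F i k)"
    by (rule sum.cartesian_product)
  also have "\<dots> = (\<Sum>(i,k)\<in>?I \<times> ?I. F (sw L i k) (sw L k i))"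
    by (rule sum.reindex_bij_witness[where i="\<lambda>(a,b). (sw L a b, sw L b a)" and j="\<lambda>(a,b). (sw L a b, sw L b a)"])
       (auto simp: sw_sw sw_idx)
  also have "\<dots> = (\<Sum>i\<in>?I. \<Sum>k\<in>?I. F (sw L i k) (sw L k i))"
    by (rule sum.cartesian_product[symmetric])
  finally show ?thesis .
qed

lemma End_G_PsiM:
  assumes A: "A \<in> End_G n m eps"
  shows "PsiM L A \<in> End_G n m (\<lambda>t. eps t \<noteq> L t)"
proof -
  let ?I = "idx n m"
  let ?e = "\<lambda>t. eps t \<noteq> L t"
  have supp: "\<And>i j. \<not> (i \<in> ?I \<and> j \<in> ?I) \<Longrightarrow> A i j = 0"
   and conj: "\<And>g h j l. (g,h) \<in> GL n \<Longrightarrow> j \<in> ?I \<Longrightarrow> l \<in> ?I \<Longrightarrow>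
       A j l = (\<Sum>i\<in>?I. \<Sum>k\<in>?I. tensor_rho m eps g h i j * A i k * tensor_rho m eps h g l k)"
    using A unfolding End_G_conj by blast+
  have "\<not> (i \<in> ?I \<and> j \<in> ?I) \<Longrightarrow> PsiM L A i j = 0" for i j
    using supp[of "sw L i j" "sw L j i"] sw_idx_iff[of L i j n m] by (simp add: PsiM_def)
  moreover have "PsiM L A j l = (\<Sum>i\<in>?I. \<Sum>k\<in>?I. tensor_rho m ?e g h i j * PsiM L A i k * tensor_rho m ?e h g l k)"
    if gh: "(g,h) \<in> GL n" and j: "j \<in> ?I" and l: "l \<in> ?I" for g h j l
  proof -
    have "PsiM L A j l = (\<Sum>i\<in>?I. \<Sum>k\<in>?I. tensor_rho m eps g h i (sw L j l) * A i k * tensor_rho m eps h g (sw L l j) k)"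
      unfolding PsiM_def by (rule conj[OF gh]) (auto intro: sw_idx j l)
    also have "\<dots> = (\<Sum>i\<in>?I. \<Sum>k\<in>?I. tensor_rho m eps g h (sw L i k) (sw L j l) * A (sw L i k) (sw L k i) * tensor_rho m eps h g (sw L l j) (sw L k i))"
      by (rule sum_sw_reindex)
    also have "\<dots> = (\<Sum>i\<in>?I. \<Sum>k\<in>?I. tensor_rho m ?e g h i j * PsiM L A i k * tensor_rho m ?e h g l k)"
    proof (intro sum.cong refl)
      fix i k
      have "tensor_rho m eps g h (sw L i k) (sw L j l) * A (sw L i k) (sw L k i) * tensor_rho m eps h g (sw L l j) (sw L k i)
          = (tensor_rho m eps g h (sw L i k) (sw L j l) * tensor_rho m eps h g (sw L l j) (sw L k i)) * PsiM L A i k"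
        by (simp add: PsiM_def ac_simps)
      also have "\<dots> = tensor_rho m ?e g h i j * PsiM L A i k * tensor_rho m ?e h g l k"
        by (simp add: rho_sw ac_simps)
      finally show "tensor_rho m eps g h (sw L i k) (sw L j l) * A (sw L i k) (sw L k i) * tensor_rho m eps h g (sw L l j) (sw L k i)
          = tensor_rho m ?e g h i j * PsiM L A i k * tensor_rho m ?e h g l k" .
    qed
    finally show ?thesis .
  qed
  ultimately show ?thesis unfolding End_G_conj by blast
qed

definition tau :: "nat \<Rightarrow> nat \<Rightarrow> nat \<Rightarrow> nat" where
  "tau r m x = (if x < m \<and> r \<le> x then x + m else if m \<le> x \<and> x < 2*m \<and> r \<le> x - m then x - m else x)"

definition phi :: "nat \<Rightarrow> nat \<Rightarrow> (nat \<Rightarrow> nat) \<Rightarrow> nat \<Rightarrow> nat" where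
  "phi r m d = (\<lambda>x. if x < 2*m then tau r m (d (tau r m x)) else d x)"

lemma tau_tau[simp]: "tau r m (tau r m x) = x"
  by (auto simp: tau_def)

lemma tau_lt[simp]: "tau r m x < 2*m \<longleftrightarrow> x < 2*m"
  by (auto simp: tau_def)

lemma tau_lt'[simp]: "x < 2*r+2*s \<Longrightarrow> tau r (r+s) x < 2*r+2*s"
  by (auto simp: tau_def)

lemma top_tau: "x < 2*m \<Longrightarrow> top_row m (tau r m x) \<longleftrightarrow> (top_row m x \<longleftrightarrow> in_F r m x)"
  by (auto simp: tau_def top_row_def in_F_def col_def)

lemma inF_tau: "x < 2*m \<Longrightarrow> in_F r m (tau r m x) \<longleftrightarrow> in_F r m x"
  by (auto simp: tau_def in_F_def col_def)

lemma phi_phi[simp]: "phi r m (phi r m d) = d"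
  by (auto simp: phi_def)

lemma phi_brauer:
  assumes d: "d \<in> brauer_diagrams m"
  shows "phi r m d \<in> brauer_diagrams m"
proof -
  have dx: "x < 2*m \<Longrightarrow> d x < 2*m" "x < 2*m \<Longrightarrow> d (d x) = x" "x < 2*m \<Longrightarrow> d x \<noteq> x"
      "\<not> x < 2*m \<Longrightarrow> d x = undefined" for x
    using d by (auto simp: brauer_diagrams_def PiE_iff extensional_def)
  show ?thesis unfolding brauer_diagrams_def
  proof (intro CollectI conjI allI impI)
    show "phi r m d \<in> {0..<2 * m} \<rightarrow>\<^sub>E {0..<2 * m}"
      by (auto simp: PiE_iff extensional_def phi_def dx)
  next
    fix x assume x: "x < 2*m"
    then have t: "tau r m x < 2*m" by simp
    show "phi r m d (phi r m d x) = x" using x t dx(1,2)[OF t] by (simp add: phi_def)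
    show "phi r m d x \<noteq> x" using x t dx(1,3)[OF t] by (auto simp: phi_def) (metis tau_tau)
  qed
qed

lemma phi_walled:
  assumes d: "d \<in> walled_diagrams r s"
  shows "phi r (r+s) d \<in> perm_diagrams (r+s)"
proof -
  let ?m = "r+s"
  have db: "d \<in> brauer_diagrams ?m" using d by (simp add: walled_diagrams_def)
  have dlt: "x < 2*?m \<Longrightarrow> d x < 2*?m" for x using db by (auto simp: brauer_diagrams_def PiE_iff)
  have W: "y < 2*?m \<Longrightarrow> (propagating ?m d y \<longrightarrow> in_F r ?m y = in_F r ?m (d y)) \<and>
      (\<not> propagating ?m d y \<longrightarrow> in_F r ?m y \<noteq> in_F r ?m (d y))" for y
    using d by (auto simp: walled_diagrams_def)
  show ?thesis unfolding perm_diagrams_def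
  proof (intro CollectI conjI allI impI phi_brauer db)
    fix x assume x: "x < 2*?m"
    define y where "y = tau r ?m x"
    have y: "y < 2*?m" "x = tau r ?m y" using x by (auto simp: y_def)
    have p: "phi r ?m d (tau r ?m y) = tau r ?m (d y)" using y(1) by (simp add: phi_def)
    show "propagating ?m (phi r ?m d) x"
      using W[OF y(1)] top_tau[OF y(1), of r] top_tau[OF dlt[OF y(1)], of r]
      unfolding propagating_def y(2) p by blast
  qed
qed

lemma phi_perm:
  assumes d: "d \<in> perm_diagrams (r+s)"
  shows "phi r (r+s) d \<in> walled_diagrams r s"
proof -
  let ?m = "r+s"
  have db: "d \<in> brauer_diagrams ?m" using d by (simp add: perm_diagrams_def)
  have dlt: "x < 2*?m \<Longrightarrow> d x < 2*?m" for x using db by (auto simp: brauer_diagrams_def PiE_iff)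
  have P: "y < 2*?m \<Longrightarrow> propagating ?m d y" for y
    using d by (auto simp: perm_diagrams_def)
  show ?thesis unfolding walled_diagrams_def
  proof (intro CollectI conjI allI impI phi_brauer db)
    fix x assume x: "x < 2*?m"
    define y where "y = tau r ?m x"
    have y: "y < 2*?m" "x = tau r ?m y" using x by (auto simp: y_def)
    have p: "phi r ?m d (tau r ?m y) = tau r ?m (d y)" using y(1) by (simp add: phi_def)
    note facts = P[OF y(1)] top_tau[OF y(1), of r] top_tau[OF dlt[OF y(1)], of r]
      inF_tau[OF y(1), of r] inF_tau[OF dlt[OF y(1)], of r]
    show "propagating ?m (phi r ?m d) x \<Longrightarrow> in_F r ?m x = in_F r ?m (phi r ?m d x)"
      using facts unfolding propagating_def y(2) p by blast
    show "\<not> propagating ?m (phi r ?m d) x \<Longrightarrow> in_F r ?m x \<noteq> in_F r ?m (phi r ?m d x)"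
      using facts unfolding propagating_def y(2) p by blast
  qed
qed

lemma lab_tau:
  assumes "x < 2*(r+s)"
  shows "lab (r+s) i j (tau r (r+s) x) = lab (r+s) (sw (\<lambda>k. r \<le> k) i j) (sw (\<lambda>k. r \<le> k) j i) x"
  using assms by (auto simp: lab_def tau_def sw_def)

lemma coeff_phi:
  assumes d: "d \<in> brauer_diagrams (r+s)"
  shows "(diag_coeff (r+s) (phi r (r+s) d) i j :: 'a::comm_ring_1)
       = diag_coeff (r+s) d (sw (\<lambda>k. r \<le> k) i j) (sw (\<lambda>k. r \<le> k) j i)"
proof -
  let ?m = "r+s"
  let ?l = "lab ?m i j" and ?l' = "lab ?m (sw (\<lambda>k. r \<le> k) i j) (sw (\<lambda>k. r \<le> k) j i)"
  have dlt: "x < 2*?m \<Longrightarrow> d x < 2*?m" for x using d by (auto simp: brauer_diagrams_def PiE_iff)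
  have "(\<forall>x<2*?m. ?l x = ?l (phi r ?m d x)) \<longleftrightarrow> (\<forall>y<2*?m. ?l' y = ?l' (d y))"
  proof
    assume H: "\<forall>x<2*?m. ?l x = ?l (phi r ?m d x)"
    show "\<forall>y<2*?m. ?l' y = ?l' (d y)"
    proof (intro allI impI)
      fix y assume y: "y < 2*?m"
      have "?l (tau r ?m y) = ?l (phi r ?m d (tau r ?m y))" using H y by simp
      then show "?l' y = ?l' (d y)" using y dlt[OF y] by (simp add: phi_def lab_tau)
    qed
  next
    assume H: "\<forall>y<2*?m. ?l' y = ?l' (d y)"
    show "\<forall>x<2*?m. ?l x = ?l (phi r ?m d x)"
    proof (intro allI impI)
      fix x assume x: "x < 2*?m"
      define y where "y = tau r ?m x"
      have y: "y < 2*?m" "x = tau r ?m y" using x by (auto simp: y_def)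
      have "?l' y = ?l' (d y)" using H y by simp
      then show "?l x = ?l (phi r ?m d x)" using y dlt[OF y(1)]
        by (simp add: phi_def lab_tau)
    qed
  qed
  then show ?thesis by (simp add: diag_coeff_def)
qed

lemma finite_brauer: "finite (brauer_diagrams m)"
  unfolding brauer_diagrams_def by (rule finite_subset[OF _ finite_PiE[of "{0..<2*m}" "\<lambda>_. {0..<2*m}"]]) auto

lemma finite_perm: "finite (perm_diagrams m)"
  by (rule finite_subset[OF _ finite_brauer]) (auto simp: perm_diagrams_def)

lemma finite_walled: "finite (walled_diagrams r s)"
  by (rule finite_subset[OF _ finite_brauer]) (auto simp: walled_diagrams_def)

lemma sigma_transport:
  "sigma_sym n (r+s) (b \<circ> phi r (r+s)) = PsiM (\<lambda>k. r \<le> k) (sigma_walled n r s (b :: _ \<Rightarrow> 'a::comm_ring_1))"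
proof (intro ext)
  fix i j
  let ?L = "\<lambda>k. r \<le> k" and ?m = "r+s"
  have "(\<Sum>d\<in>perm_diagrams ?m. (b \<circ> phi r ?m) d * diag_coeff ?m d i j)
      = (\<Sum>d\<in>walled_diagrams r s. b d * diag_coeff ?m (phi r ?m d) i j)"
    by (rule sum.reindex_bij_witness[where i="phi r ?m" and j="phi r ?m"])
       (auto intro: phi_perm phi_walled)
  also have "\<dots> = (\<Sum>d\<in>walled_diagrams r s. b d * diag_coeff ?m d (sw ?L i j) (sw ?L j i))"
    by (intro sum.cong refl) (simp add: coeff_phi walled_diagrams_def)
  finally show "sigma_sym n (r+s) (b \<circ> phi r (r+s)) i j = PsiM ?L (sigma_walled n r s b) i j"
    using sw_idx_iff[of ?L i j n ?m]
    by (simp add: sigma_sym_def sigma_walled_def PsiM_def rep_map_def)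
qed

lemma perm_diag_facts:
  assumes d: "d \<in> perm_diagrams m"
  shows "\<And>x. x < m \<Longrightarrow> m \<le> d x \<and> d x < 2*m"
    and "\<And>x. m \<le> x \<Longrightarrow> x < 2*m \<Longrightarrow> d x < m"
    and "\<And>x. x < 2*m \<Longrightarrow> d (d x) = x"
    and "\<And>x. \<not> x < 2*m \<Longrightarrow> d x = undefined"
proof -
  have B: "d \<in> brauer_diagrams m" and P: "\<And>x. x < 2*m \<Longrightarrow> propagating m d x"
    using d by (auto simp: perm_diagrams_def)
  have lt: "x < 2*m \<Longrightarrow> d x < 2*m" for x using B by (auto simp: brauer_diagrams_def PiE_iff)
  show "d (d x) = x" if "x < 2*m" for x using B that by (auto simp: brauer_diagrams_def)
  show "d x = undefined" if "\<not> x < 2*m" for x using B that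
    by (auto simp: brauer_diagrams_def PiE_iff extensional_def)
  show "m \<le> d x \<and> d x < 2*m" if "x < m" for x
    using P[of x] lt[of x] that by (simp add: propagating_def top_row_def)
  show "d x < m" if "m \<le> x" "x < 2*m" for x
    using P[of x] that by (simp add: propagating_def top_row_def)
qed

lemma perm_faithful:
  assumes mn: "m \<le> n" and b: "b \<in> alg_elems (perm_diagrams m)"
    and z: "sigma_sym n m b = (\<lambda>_ _. (0::'a::comm_ring_1))"
  shows "b = (\<lambda>_. 0)"
proof
  fix d
  show "b d = 0"
  proof (cases "d \<in> perm_diagrams m")
    case False then show ?thesis using b by (simp add: alg_elems_def)
  next
    case True
    note F = perm_diag_facts[OF True]
    define i where "i = (\<lambda>k::nat. if k < m then k else undefined)"
    define j where "j = (\<lambda>y. if y < m then d (y + m) else undefined)"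
    have i: "i \<in> idx n m" using mn by (auto simp: i_def idx_def PiE_iff extensional_def)
    have jn: "y < m \<Longrightarrow> d (y+m) < n" for y using F(2)[of "y+m"] mn by simp
    have j: "j \<in> idx n m" using jn by (auto simp: j_def idx_def PiE_iff extensional_def)
    have labf: "x < 2*m \<Longrightarrow> lab m i j x = (if x < m then x else d x)" for x
      by (auto simp: lab_def i_def j_def)
    have coeff: "(diag_coeff m d' i j :: 'a) = (if d' = d then 1 else 0)" if d': "d' \<in> perm_diagrams m" for d'
    proof -
      note F' = perm_diag_facts[OF d']
      have "(\<forall>x<2*m. lab m i j x = lab m i j (d' x)) \<longleftrightarrow> d' = d"
      proof
        assume H: "\<forall>x<2*m. lab m i j x = lab m i j (d' x)"
        show "d' = d"
        proof
          fix x
          show "d' x = d x"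
          proof (cases "x < m")
            case True
            have "x = d (d' x)" using H[rule_format, of x] True F'(1)[OF True] labf by auto
            then show ?thesis using F(3) F'(1)[OF True] by metis
          next
            case c: False
            show ?thesis
            proof (cases "x < 2*m")
              case True
              have "d x = d' x" using H[rule_format, of x] True c F'(2)[of x] labf by auto
              then show ?thesis by simp
            next
              case False then show ?thesis using F(4) F'(4) by simp
            qed
          qed
        qed
      next
        assume "d' = d"
        show "\<forall>x<2*m. lab m i j x = lab m i j (d' x)"
        proof (intro allI impI)
          fix x assume x: "x < 2*m"
          show "lab m i j x = lab m i j (d' x)"
          proof (cases "x < m")
            case True
            then show ?thesis using F(1)[OF True] F(3)[OF x] labf[OF x] labf[of "d x"] \<open>d' = d\<close> by simp
          next
            case False
            then show ?thesis using F(2)[of x] x labf[OF x] labf[of "d x"] \<open>d' = d\<close> by simp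
          qed
        qed
      qed
      then show ?thesis by (simp add: diag_coeff_def)
    qed
    have "0 = sigma_sym n m b i j" using z by simp
    also have "\<dots> = (\<Sum>d'\<in>perm_diagrams m. b d' * (if d' = d then 1 else 0))"
      using i j coeff by (simp add: sigma_sym_def rep_map_def)
    also have "\<dots> = b d" using True finite_perm by (simp add: if_distrib cong: if_cong)
    finally show ?thesis by simp
  qed
qed

definition Dg :: "nat \<Rightarrow> (nat \<Rightarrow> nat) \<Rightarrow> nat \<Rightarrow> nat" where
  "Dg m p = (\<lambda>x. if x < m then p x + m else if x < 2*m then inv p (x - m) else undefined)"

lemma perm_lt:
  fixes n m x :: nat
  assumes p: "p permutes {0..n}" and nm: "n < m" and x: "x < m"
  shows "p x < m"
proof (cases "x \<le> n")
  case True then have "p x \<in> {0..n}" using permutes_in_image[OF p, of x] by simp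
  then show ?thesis using nm by simp
next
  case False then show ?thesis using permutes_not_in[OF p, of x] x by simp
qed

lemma Dg_perm:
  assumes p: "p permutes {0..n}" and nm: "n < m"
  shows "Dg m p \<in> perm_diagrams m"
proof -
  have ip: "inv p permutes {0..n}" by (rule permutes_inv[OF p])
  have a: "x < m \<Longrightarrow> p x < m" for x using perm_lt[OF p nm] .
  have b: "x < m \<Longrightarrow> inv p x < m" for x using perm_lt[OF ip nm] .
  have c: "inv p (p x) = x" "p (inv p x) = x" for x using permutes_inverses[OF p] by auto
  show ?thesis
    unfolding perm_diagrams_def brauer_diagrams_def
  proof (intro CollectI conjI allI impI)
    show "Dg m p \<in> {0..<2 * m} \<rightarrow>\<^sub>E {0..<2 * m}"
  proof -
    have "Dg m p x \<in> {0..<2*m}" if x: "x < 2*m" for x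
    proof (cases "x < m")
      case True then show ?thesis using a[OF True] by (simp add: Dg_def)
    next
      case False
      then have "x - m < m" using x by simp
      then show ?thesis using b[of "x - m"] False x by (simp add: Dg_def)
    qed
    moreover have "Dg m p \<in> extensional {0..<2*m}" by (auto simp: Dg_def extensional_def)
    ultimately show ?thesis by (auto simp: PiE_iff)
  qed
  next
    fix x assume x: "x < 2*m"
    have "Dg m p (Dg m p x) = x \<and> Dg m p x \<noteq> x \<and> propagating m (Dg m p) x"
    proof (cases "x < m")
      case True
      then show ?thesis using a[OF True] c by (simp add: Dg_def propagating_def top_row_def)
    next
      case F: False
      then have y: "x - m < m" using x by simp
      show ?thesis using b[OF y] c F x by (simp add: Dg_def propagating_def top_row_def)
    qed
    then show "Dg m p (Dg m p x) = x" "Dg m p x \<noteq> x" "propagating m (Dg m p) x" by auto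
  qed
qed

lemma Dg_inj:
  assumes p: "p permutes {0..n}" and q: "q permutes {0..n}" and nm: "n < m"
    and e: "Dg m p = Dg m q"
  shows "p = q"
proof
  fix x
  show "p x = q x"
  proof (cases "x < m")
    case True
    have "Dg m p x = Dg m q x" using e by simp
    then show ?thesis using True by (simp add: Dg_def)
  next
    case False
    then show ?thesis using permutes_not_in[OF p, of x] permutes_not_in[OF q, of x] nm by simp
  qed
qed

lemma coeff_Dg:
  assumes p: "p permutes {0..n}" and nm: "n < m"
  shows "(diag_coeff m (Dg m p) i j :: 'a::comm_ring_1) = (if \<forall>x<m. i x = j (p x) then 1 else 0)"
proof -
  have ip: "inv p permutes {0..n}" by (rule permutes_inv[OF p])
  have a: "x < m \<Longrightarrow> p x < m" for x using perm_lt[OF p nm] .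
  have b: "x < m \<Longrightarrow> inv p x < m" for x using perm_lt[OF ip nm] .
  have c: "inv p (p x) = x" "p (inv p x) = x" for x using permutes_inverses[OF p] by auto
  have "(\<forall>x<2*m. lab m i j x = lab m i j (Dg m p x)) \<longleftrightarrow> (\<forall>x<m. i x = j (p x))"
  proof
    assume H: "\<forall>x<2*m. lab m i j x = lab m i j (Dg m p x)"
    show "\<forall>x<m. i x = j (p x)"
    proof (intro allI impI)
      fix x assume x: "x < m"
      then show "i x = j (p x)" using H[rule_format, of x] by (simp add: lab_def Dg_def)
    qed
  next
    assume H: "\<forall>x<m. i x = j (p x)"
    show "\<forall>x<2*m. lab m i j x = lab m i j (Dg m p x)"
    proof (intro allI impI)
      fix x assume x: "x < 2*m"
      show "lab m i j x = lab m i j (Dg m p x)"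
      proof (cases "x < m")
        case True then show ?thesis using H by (simp add: lab_def Dg_def)
      next
        case False
        then have y: "x - m < m" using x by simp
        have "i (inv p (x - m)) = j (p (inv p (x - m)))" using H b[OF y] by blast
        then show ?thesis using False x b[OF y] by (simp add: lab_def Dg_def c)
      qed
    qed
  qed
  then show ?thesis by (simp add: diag_coeff_def)
qed

lemma sign_sum_zero:
  fixes i j :: "nat \<Rightarrow> nat"
  assumes ab: "a \<le> n" "b \<le> n" "a \<noteq> b" and iab: "i a = i b" and nm: "n < m"
  shows "(\<Sum>p\<in>{p. p permutes {0..n} \<and> (\<forall>x<m. i x = j (p x))}. (of_int (sign p) :: 'a::comm_ring_1)) = 0"
proof -
  let ?Q = "{p. p permutes {0..n} \<and> (\<forall>x<m. i x = j (p x))}"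
  let ?t = "Transposition.transpose a b"
  let ?Q1 = "{p \<in> ?Q. p a < p b}" and ?Q2 = "{p \<in> ?Q. \<not> p a < p b}"
  have fin: "finite ?Q"
    by (rule finite_subset[OF _ finite_permutations[of "{0..n}"]]) auto
  have tp: "?t permutes {0..n}" using ab by (intro permutes_swap_id) auto
  have closed: "p \<circ> ?t \<in> ?Q" if "p \<in> ?Q" for p
  proof -
    have pp: "p permutes {0..n}" and H: "\<forall>x<m. i x = j (p x)" using that by auto
    have "i x = j ((p \<circ> ?t) x)" if x: "x < m" for x
    proof -
      have tx: "?t x < m" using x ab nm by (cases "x = a"; cases "x = b") simp_all
      have "i (?t x) = i x" using iab by (cases "x = a"; cases "x = b") simp_all
      then show ?thesis using H tx by auto
    qed
    then show ?thesis using permutes_compose[OF tp pp] by auto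
  qed
  have sgn: "sign (p \<circ> ?t) = - sign p" if "p \<in> ?Q" for p
  proof -
    have pp: "p permutes {0..n}" using that by auto
    have "permutation p" using permutes_imp_permutation[of "{0..n}" p] pp by simp
    moreover have "permutation ?t" using permutes_imp_permutation[of "{0..n}" ?t] tp by simp
    ultimately have "sign (p \<circ> ?t) = sign p * sign ?t" by (rule sign_compose)
    then show ?thesis using ab by (simp add: sign_swap_id)
  qed
  have neq: "p a \<noteq> p b" if "p \<in> ?Q" for p
  proof -
    have pp: "p permutes {0..n}" using that by simp
    have "inj p" by (rule permutes_inj[OF pp])
    then show ?thesis using ab by (simp add: inj_eq)
  qed
  have f1: "finite ?Q1" "finite ?Q2" by (rule finite_subset[OF _ fin], blast)+
  have QQ: "?Q = ?Q1 \<union> ?Q2" by auto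
  have "(\<Sum>p\<in>?Q. (of_int (sign p) :: 'a)) = (\<Sum>p\<in>?Q1. of_int (sign p)) + (\<Sum>p\<in>?Q2. of_int (sign p))"
    by (subst arg_cong[OF QQ, of "sum (\<lambda>p. of_int (sign p))"]) (rule sum.union_disjoint[OF f1], auto)
  also have "(\<Sum>p\<in>?Q2. (of_int (sign p) :: 'a)) = (\<Sum>p\<in>?Q1. of_int (sign (p \<circ> ?t)))"
  proof (rule sum.reindex_bij_witness[where i="\<lambda>p. p \<circ> ?t" and j="\<lambda>p. p \<circ> ?t"])
    fix p assume "p \<in> ?Q2"
    then show "p \<circ> ?t \<circ> ?t = p" by (simp add: comp_assoc)
  next
    fix p assume p: "p \<in> ?Q2"
    then have "p b < p a" using neq[of p] by auto
    then show "p \<circ> ?t \<in> ?Q1" using closed[of p] p by auto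
  next
    fix p assume "p \<in> ?Q1"
    then show "p \<circ> ?t \<circ> ?t = p" by (simp add: comp_assoc)
  next
    fix p assume p: "p \<in> ?Q1"
    then show "p \<circ> ?t \<in> ?Q2" using closed[of p] by auto
  next
    fix p assume "p \<in> ?Q2"
    then show "of_int (sign (p \<circ> ?t \<circ> ?t)) = (of_int (sign p) :: 'a)" by (simp add: comp_assoc)
  qed
  also have "\<dots> = (\<Sum>p\<in>?Q1. - of_int (sign p))"
    using sgn by (intro sum.cong refl) auto
  finally show ?thesis by (simp add: sum_negf)
qed

lemma perm_not_faithful:
  assumes nm: "n < m" and one: "(1::'a::comm_ring_1) \<noteq> 0"
  shows "\<exists>b\<in>(alg_elems (perm_diagrams m) :: ((nat \<Rightarrow> nat) \<Rightarrow> 'a) set).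
           sigma_sym n m b = (\<lambda>_ _. 0) \<and> b \<noteq> (\<lambda>_. 0)"
proof -
  let ?P = "{p. p permutes {0..n}}"
  have finP: "finite ?P" by (rule finite_permutations) simp
  define b where "b = (\<lambda>d. \<Sum>p\<in>?P. if d = Dg m p then (of_int (sign p)::'a) else 0)"
  have balg: "b \<in> alg_elems (perm_diagrams m)"
    unfolding alg_elems_def b_def
  proof (intro CollectI allI impI sum.neutral ballI)
    fix d p assume "d \<notin> perm_diagrams m" "p \<in> ?P"
    then show "(if d = Dg m p then of_int (sign p) else 0) = (0::'a)" using Dg_perm[of p n m] nm by auto
  qed
  have "b (Dg m id) = (\<Sum>p\<in>?P. if p = id then (of_int (sign p)::'a) else 0)"
    unfolding b_def
  proof (intro sum.cong refl)
    fix p assume "p \<in> ?P"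
    then have "Dg m id = Dg m p \<longleftrightarrow> p = id" using Dg_inj[of id n p m] nm permutes_id[of "{0..n}"] by auto
    then show "(if Dg m id = Dg m p then of_int (sign p) else 0) = (if p = id then of_int (sign p) else (0::'a))"
      by simp
  qed
  also have "\<dots> = 1" using finP permutes_id[of "{0..n}"] by simp
  finally have bnz: "b \<noteq> (\<lambda>_. 0)" using one by (metis)
  have "sigma_sym n m b i j = 0" for i j
  proof (cases "i \<in> idx n m \<and> j \<in> idx n m")
    case False then show ?thesis unfolding sigma_sym_def rep_map_def by (simp only: if_False)
  next
    case True
    then have i: "i \<in> idx n m" by simp
    have "\<not> inj_on i {0..n}"
    proof (rule pigeonhole)
      have "i ` {0..n} \<subseteq> {0..<n}" using i nm by (auto simp: idx_def PiE_iff)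
      then have "card (i ` {0..n}) \<le> n" using card_mono[of "{0..<n}"] by fastforce
      then show "card (i ` {0..n}) < card {0..n}" by simp
    qed
    then obtain a c where ac: "a \<in> {0..n}" "c \<in> {0..n}" "a \<noteq> c" "i a = i c"
      unfolding inj_on_def by blast
    let ?Q = "{p \<in> ?P. \<forall>x<m. i x = j (p x)}"
    have "sigma_sym n m b i j = (\<Sum>d\<in>perm_diagrams m. b d * diag_coeff m d i j)"
      using True by (simp add: sigma_sym_def rep_map_def)
    also have "\<dots> = (\<Sum>d\<in>perm_diagrams m. \<Sum>p\<in>?P. if d = Dg m p then of_int (sign p) * diag_coeff m d i j else 0)"
      unfolding b_def sum_distrib_right by (intro sum.cong refl) simp
    also have "\<dots> = (\<Sum>p\<in>?P. \<Sum>d\<in>perm_diagrams m. if d = Dg m p then of_int (sign p) * diag_coeff m d i j else 0)"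
      by (rule sum.swap)
    also have "\<dots> = (\<Sum>p\<in>?P. of_int (sign p) * diag_coeff m (Dg m p) i j)"
    proof (intro sum.cong refl)
      fix p assume "p \<in> ?P"
      then have "Dg m p \<in> perm_diagrams m" using Dg_perm nm by auto
      then show "(\<Sum>d\<in>perm_diagrams m. if d = Dg m p then of_int (sign p) * diag_coeff m d i j else 0)
          = of_int (sign p) * (diag_coeff m (Dg m p) i j :: 'a)"
        using finite_perm[of m] by (simp add: sum.delta')
    qed
    also have "\<dots> = (\<Sum>p\<in>?P. if \<forall>x<m. i x = j (p x) then of_int (sign p) else 0)"
    proof (intro sum.cong refl)
      fix p assume "p \<in> ?P"
      then have "(diag_coeff m (Dg m p) i j :: 'a) = (if \<forall>x<m. i x = j (p x) then 1 else 0)"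
        using coeff_Dg[of p n m i j] nm by simp
      then show "of_int (sign p) * (diag_coeff m (Dg m p) i j :: 'a) = (if \<forall>x<m. i x = j (p x) then of_int (sign p) else 0)"
        by auto
    qed
    also have "\<dots> = (\<Sum>p\<in>?Q. of_int (sign p))"
      by (rule sum.inter_filter[OF finP, symmetric])
    also have "\<dots> = 0"
      using sign_sum_zero[of a n c i m j] ac nm by simp
    finally show ?thesis .
  qed
  then show ?thesis using balg bnz by blast
qed

lemma free_transport:
  assumes inv: "\<And>x. \<phi> (\<phi> x) = x" and fr: "free_of_rank K k"
  shows "free_of_rank ((\<lambda>b. b \<circ> \<phi>) ` K) k"
proof -
  obtain f where f1: "\<forall>t<k. f t \<in> K"
    and f2: "\<forall>c. (\<lambda>x. \<Sum>t<k. c t * f t x) = (\<lambda>_. 0) \<longrightarrow> (\<forall>t<k. c t = 0)"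
    and f3: "\<forall>v\<in>K. \<exists>c. v = (\<lambda>x. \<Sum>t<k. c t * f t x)"
    using fr unfolding free_of_rank_def by blast
  show ?thesis unfolding free_of_rank_def
  proof (intro exI[of _ "\<lambda>t. f t \<circ> \<phi>"] conjI allI impI ballI)
    fix t assume "t < k" then show "f t \<circ> \<phi> \<in> (\<lambda>b. b \<circ> \<phi>) ` K" using f1 by blast
  next
    fix c t assume H: "(\<lambda>x. \<Sum>t<k. c t * (f t \<circ> \<phi>) x) = (\<lambda>_. 0)" and t: "t < k"
    have "(\<lambda>x. \<Sum>t<k. c t * f t x) = (\<lambda>_. 0)"
    proof
      fix y
      have "(\<Sum>t<k. c t * (f t \<circ> \<phi>) (\<phi> y)) = 0" using fun_cong[OF H, of "\<phi> y"] by simp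
      then show "(\<Sum>t<k. c t * f t y) = 0" by (simp add: inv)
    qed
    then show "c t = 0" using f2 t by blast
  next
    fix v assume "v \<in> (\<lambda>b. b \<circ> \<phi>) ` K"
    then obtain w where w: "w \<in> K" "v = w \<circ> \<phi>" by blast
    obtain c where "w = (\<lambda>x. \<Sum>t<k. c t * f t x)" using f3 w(1) by blast
    then show "\<exists>c. v = (\<lambda>x. \<Sum>t<k. c t * (f t \<circ> \<phi>) x)" using w(2) by (auto simp: o_def)
  qed
qed

lemma free_transport_iff:
  assumes inv: "\<And>x. \<phi> (\<phi> x) = x"
  shows "free_of_rank ((\<lambda>b. b \<circ> \<phi>) ` K) k \<longleftrightarrow> free_of_rank K k"
proof
  assume "free_of_rank ((\<lambda>b. b \<circ> \<phi>) ` K) k"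
  then have "free_of_rank ((\<lambda>b. b \<circ> \<phi>) ` (\<lambda>b. b \<circ> \<phi>) ` K) k" by (rule free_transport[OF inv])
  moreover have "(\<lambda>b. b \<circ> \<phi>) ` (\<lambda>b. b \<circ> \<phi>) ` K = K"
    by (auto simp: image_image o_def inv)
  ultimately show "free_of_rank K k" by simp
qed (rule free_transport[OF inv])

lemma PsiM_zero: "PsiM L A = (\<lambda>_ _. 0) \<longleftrightarrow> A = (\<lambda>_ _. 0)"
  by (metis PsiM_PsiM PsiM_def)

theorem theorem1p1:
  fixes n r s :: nat
  assumes "n \<ge> 1" and "(1::'a::comm_ring_1) \<noteq> 0"
  shows
    "((\<forall>A \<in> (End_G n (r+s) (\<lambda>k. k < r) :: ((nat \<Rightarrow> nat) \<Rightarrow> (nat \<Rightarrow> nat) \<Rightarrow> 'a) set).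
         \<exists>b \<in> alg_elems (walled_diagrams r s). sigma_walled n r s b = A)
      \<longleftrightarrow>
      (\<forall>A \<in> (End_G n (r+s) (\<lambda>_. True) :: ((nat \<Rightarrow> nat) \<Rightarrow> (nat \<Rightarrow> nat) \<Rightarrow> 'a) set).
         \<exists>b \<in> alg_elems (perm_diagrams (r+s)). sigma_sym n (r+s) b = A))
   \<and>
    ((\<forall>b \<in> (alg_elems (walled_diagrams r s) :: ((nat \<Rightarrow> nat) \<Rightarrow> 'a) set).
         sigma_walled n r s b = (\<lambda>_ _. 0) \<longrightarrow> b = (\<lambda>_. 0))
      \<longleftrightarrow> n \<ge> r + s)
   \<and>
    ((free_module (annihilator (walled_diagrams r s) (sigma_walled n r s) :: ((nat \<Rightarrow> nat) \<Rightarrow> 'a) set)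
      \<longleftrightarrow> free_module (annihilator (perm_diagrams (r+s)) (sigma_sym n (r+s)) :: ((nat \<Rightarrow> nat) \<Rightarrow> 'a) set))
     \<and>
     (\<forall>k. free_of_rank (annihilator (walled_diagrams r s) (sigma_walled n r s) :: ((nat \<Rightarrow> nat) \<Rightarrow> 'a) set) k
      \<longleftrightarrow> free_of_rank (annihilator (perm_diagrams (r+s)) (sigma_sym n (r+s)) :: ((nat \<Rightarrow> nat) \<Rightarrow> 'a) set) k))"
proof -
  let ?m = "r+s" and ?L = "\<lambda>k::nat. r \<le> k"
  let ?T = "\<lambda>b::(nat \<Rightarrow> nat) \<Rightarrow> 'a. b \<circ> phi r ?m"
  let ?Ew = "End_G n ?m (\<lambda>k. k < r) :: ((nat \<Rightarrow> nat) \<Rightarrow> (nat \<Rightarrow> nat) \<Rightarrow> 'a) set"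
  let ?Es = "End_G n ?m (\<lambda>_. True) :: ((nat \<Rightarrow> nat) \<Rightarrow> (nat \<Rightarrow> nat) \<Rightarrow> 'a) set"
  let ?aw = "alg_elems (walled_diagrams r s) :: ((nat \<Rightarrow> nat) \<Rightarrow> 'a) set"
  let ?as = "alg_elems (perm_diagrams ?m) :: ((nat \<Rightarrow> nat) \<Rightarrow> 'a) set"
  have TT: "?T (?T b) = b" for b by (simp add: o_def comp_assoc)
  have ST: "sigma_sym n ?m (?T b) = PsiM ?L (sigma_walled n r s b)" for b :: "(nat \<Rightarrow> nat) \<Rightarrow> 'a"
    by (rule sigma_transport)
  have Taw: "?T b \<in> ?as" if "b \<in> ?aw" for b
    using that phi_walled[of "phi r ?m d" r s for d] by (auto simp: alg_elems_def)
  have Tas: "?T b \<in> ?aw" if "b \<in> ?as" for b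
    using that phi_perm[of "phi r ?m d" r s for d] by (auto simp: alg_elems_def)
  have e1: "(\<lambda>t. (t < r) \<noteq> ?L t) = (\<lambda>_. True)" by auto
  have e2: "(\<lambda>t. True \<noteq> ?L t) = (\<lambda>t. t < r)" by auto
  have Ew: "PsiM ?L A \<in> ?Es" if "A \<in> ?Ew" for A
    using End_G_PsiM[OF that, of ?L] by (simp only: e1)
  have Es: "PsiM ?L A \<in> ?Ew" if "A \<in> ?Es" for A
    using End_G_PsiM[OF that, of ?L] by (simp only: e2)
  have SW: "sigma_walled n r s (?T b) = PsiM ?L (sigma_sym n ?m b)" for b
    using ST[of "?T b"] by (simp add: TT)
  have P1: "(\<forall>A\<in>?Ew. \<exists>b\<in>?aw. sigma_walled n r s b = A) \<longleftrightarrow> (\<forall>A\<in>?Es. \<exists>b\<in>?as. sigma_sym n ?m b = A)"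
  proof
    assume H: "\<forall>A\<in>?Ew. \<exists>b\<in>?aw. sigma_walled n r s b = A"
    show "\<forall>A\<in>?Es. \<exists>b\<in>?as. sigma_sym n ?m b = A"
    proof
      fix A assume "A \<in> ?Es"
      then obtain b where "b \<in> ?aw" "sigma_walled n r s b = PsiM ?L A" using H Es by blast
      then show "\<exists>b\<in>?as. sigma_sym n ?m b = A" using Taw ST by (metis PsiM_PsiM)
    qed
  next
    assume H: "\<forall>A\<in>?Es. \<exists>b\<in>?as. sigma_sym n ?m b = A"
    show "\<forall>A\<in>?Ew. \<exists>b\<in>?aw. sigma_walled n r s b = A"
    proof
      fix A assume "A \<in> ?Ew"
      then obtain b where "b \<in> ?as" "sigma_sym n ?m b = PsiM ?L A" using H Ew by blast
      then show "\<exists>b\<in>?aw. sigma_walled n r s b = A" using Tas SW by (metis PsiM_PsiM)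
    qed
  qed
  have FW: "(\<forall>b\<in>?aw. sigma_walled n r s b = (\<lambda>_ _. 0) \<longrightarrow> b = (\<lambda>_. 0)) \<longleftrightarrow>
            (\<forall>b\<in>?as. sigma_sym n ?m b = (\<lambda>_ _. 0) \<longrightarrow> b = (\<lambda>_. 0))"
  proof
    assume H: "\<forall>b\<in>?aw. sigma_walled n r s b = (\<lambda>_ _. 0) \<longrightarrow> b = (\<lambda>_. 0)"
    show "\<forall>b\<in>?as. sigma_sym n ?m b = (\<lambda>_ _. 0) \<longrightarrow> b = (\<lambda>_. 0)"
    proof (intro ballI impI)
      fix b assume b: "b \<in> ?as" "sigma_sym n ?m b = (\<lambda>_ _. 0)"
      then have "sigma_walled n r s (?T b) = (\<lambda>_ _. 0)" using SW PsiM_zero by metis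
      then have "?T b = (\<lambda>_. 0)" using H Tas[OF b(1)] by blast
      then show "b = (\<lambda>_. 0)" using TT[of b] by (metis comp_apply)
    qed
  next
    assume H: "\<forall>b\<in>?as. sigma_sym n ?m b = (\<lambda>_ _. 0) \<longrightarrow> b = (\<lambda>_. 0)"
    show "\<forall>b\<in>?aw. sigma_walled n r s b = (\<lambda>_ _. 0) \<longrightarrow> b = (\<lambda>_. 0)"
    proof (intro ballI impI)
      fix b assume b: "b \<in> ?aw" "sigma_walled n r s b = (\<lambda>_ _. 0)"
      then have "sigma_sym n ?m (?T b) = (\<lambda>_ _. 0)" using ST PsiM_zero by metis
      then have "?T b = (\<lambda>_. 0)" using H Taw[OF b(1)] by blast
      then show "b = (\<lambda>_. 0)" using TT[of b] by (metis comp_apply)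
    qed
  qed
  have FS: "(\<forall>b\<in>?as. sigma_sym n ?m b = (\<lambda>_ _. 0) \<longrightarrow> b = (\<lambda>_. 0)) \<longleftrightarrow> n \<ge> ?m"
  proof
    assume H: "\<forall>b\<in>?as. sigma_sym n ?m b = (\<lambda>_ _. 0) \<longrightarrow> b = (\<lambda>_. 0)"
    show "n \<ge> ?m"
    proof (rule ccontr)
      assume "\<not> n \<ge> ?m"
      then have "n < ?m" by simp
      then show False using perm_not_faithful[of n ?m, OF _ assms(2)] H by blast
    qed
  next
    assume "n \<ge> ?m"
    then show "\<forall>b\<in>?as. sigma_sym n ?m b = (\<lambda>_ _. 0) \<longrightarrow> b = (\<lambda>_. 0)"
      using perm_faithful by blast
  qed
  let ?Kw = "annihilator (walled_diagrams r s) (sigma_walled n r s) :: ((nat \<Rightarrow> nat) \<Rightarrow> 'a) set"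
  let ?Ks = "annihilator (perm_diagrams ?m) (sigma_sym n ?m) :: ((nat \<Rightarrow> nat) \<Rightarrow> 'a) set"
  have KK: "?Ks = ?T ` ?Kw"
  proof
    show "?T ` ?Kw \<subseteq> ?Ks"
    proof
      fix v assume "v \<in> ?T ` ?Kw"
      then obtain b where b: "b \<in> ?aw" "sigma_walled n r s b = (\<lambda>_ _. 0)" "v = ?T b"
        by (auto simp: annihilator_def)
      then show "v \<in> ?Ks" using Taw ST PsiM_zero by (auto simp: annihilator_def)
    qed
  next
    show "?Ks \<subseteq> ?T ` ?Kw"
    proof
      fix v assume "v \<in> ?Ks"
      then have v: "v \<in> ?as" "sigma_sym n ?m v = (\<lambda>_ _. 0)" by (auto simp: annihilator_def)
      then have "sigma_walled n r s (?T v) = (\<lambda>_ _. 0)" using SW PsiM_zero by metis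
      then have "?T v \<in> ?Kw" using Tas[OF v(1)] by (simp add: annihilator_def)
      then show "v \<in> ?T ` ?Kw" using TT[of v] by (metis image_eqI)
    qed
  qed
  have P3: "free_of_rank ?Kw k \<longleftrightarrow> free_of_rank ?Ks k" for k
    unfolding KK by (rule free_transport_iff[symmetric]) simp
  show ?thesis using P1 FW FS P3 by (simp add: free_module_def)
qed

end
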